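(* Let $\psi:X\to Y$ be a function between two finite metric spaces such that $\psi(X)$ is $D$-dense in $Y$ for some $D\geq0$. Let $B\subseteq Y$ be nonempty with $|B|\leq|Y|/2$ and $1-N_Y(D)\frac{|\partial_D(B)|}{|B|}\geq\frac12$. Then either $A=\psi^{-1}(B)$ or $A=\psi^{-1}(Y\setminus B)$ satisfies $|A|\leq|X|/2$ and $|A|\geq\frac{1}{2N_Y(D)}|B|$.
   Context: A subset $S\subseteq Y$ is $D$-dense if every point of $Y$ is within distance $D$ of a point of $S$. $N_Y(D)=\sup_{y\in Y}|B(y,D)|$ (closed balls). $\partial_D(B)=\{y\in Y\setminus B: d(y,B)\leq D\}$ is the outer $D$-boundary. *)

theory Defs
  imports "HOL-Analysis.Analysis"
begin

definition dense_in :: "'a set \<Rightarrow> ('a \<Rightarrow> 'a \<Rightarrow> real) \<Rightarrow> real \<Rightarrow> 'a set \<Rightarrow> bool" where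
  "dense_in Y d D S \<longleftrightarrow> S \<subseteq> Y \<and> (\<forall>y\<in>Y. \<exists>s\<in>S. d y s \<le> D)"

definition ball_growth :: "'a set \<Rightarrow> ('a \<Rightarrow> 'a \<Rightarrow> real) \<Rightarrow> real \<Rightarrow> nat" where
  "ball_growth Y d D = Max ((\<lambda>y. card {z\<in>Y. d y z \<le> D}) ` Y)"

text \<open>Outer D-boundary of B in Y (for finite nonempty B, d(y,B) \<le> D iff some b has d y b \<le> D).\<close>
definition outer_boundary :: "'a set \<Rightarrow> ('a \<Rightarrow> 'a \<Rightarrow> real) \<Rightarrow> real \<Rightarrow> 'a set \<Rightarrow> 'a set" where
  "outer_boundary Y d D B = {y \<in> Y - B. \<exists>b\<in>B. d y b \<le> D}"

end

theory Submission
  imports Defs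
begin

lemma ball_le_growth:
  assumes "finite Y" "z \<in> Y"
  shows "card {w\<in>Y. d z w \<le> D} \<le> ball_growth Y d D"
  unfolding ball_growth_def using assms by (intro Max_ge) auto

lemma cover_card:
  assumes "finite Y" "Z \<subseteq> Y" "S \<subseteq> (\<Union>z\<in>Z. {w\<in>Y. d z w \<le> D})"
  shows "card S \<le> ball_growth Y d D * card Z"
proof -
  have fZ: "finite Z" using assms finite_subset by blast
  have "card S \<le> card (\<Union>z\<in>Z. {w\<in>Y. d z w \<le> D})"
    using assms fZ by (intro card_mono) auto
  also have "\<dots> \<le> (\<Sum>z\<in>Z. card {w\<in>Y. d z w \<le> D})" using fZ by (rule card_UN_le)
  also have "\<dots> \<le> (\<Sum>z\<in>Z. ball_growth Y d D)"
    using assms by (intro sum_mono ball_le_growth) auto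
  finally show ?thesis by (simp add: mult.commute)
qed

theorem lemma3p17:
  fixes X :: "'a set" and dX :: "'a \<Rightarrow> 'a \<Rightarrow> real"
    and Y :: "'b set" and dY :: "'b \<Rightarrow> 'b \<Rightarrow> real"
    and \<psi> :: "'a \<Rightarrow> 'b" and D :: real and B :: "'b set"
  assumes "Metric_space X dX" and "Metric_space Y dY"
    and "finite X" and "finite Y"
    and "\<psi> \<in> X \<rightarrow> Y"
    and "D \<ge> 0"
    and "dense_in Y dY D (\<psi> ` X)"
    and "B \<subseteq> Y" and "B \<noteq> {}"
    and "real (card B) \<le> real (card Y) / 2"
    and "1 - real (ball_growth Y dY D) * real (card (outer_boundary Y dY D B)) / real (card B) \<ge> 1/2"
  shows "(let A = {x\<in>X. \<psi> x \<in> B} in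
            real (card A) \<le> real (card X) / 2 \<and>
            real (card A) \<ge> real (card B) / (2 * real (ball_growth Y dY D)))
       \<or> (let A = {x\<in>X. \<psi> x \<in> Y - B} in
            real (card A) \<le> real (card X) / 2 \<and>
            real (card A) \<ge> real (card B) / (2 * real (ball_growth Y dY D)))"
proof -
  interpret M: Metric_space Y dY by fact
  define N where "N = ball_growth Y dY D"
  define P where "P = outer_boundary Y dY D B"
  define A1 where "A1 = {x\<in>X. \<psi> x \<in> B}"
  define A2 where "A2 = {x\<in>X. \<psi> x \<in> Y - B}"
  have fB: "finite B" using assms(4,8) finite_subset by blast
  have cB: "card B > 0" using fB assms(9) by (simp add: card_gt_0_iff)
  obtain b where b: "b \<in> B" using assms(9) by blast
  have "1 \<le> card {w\<in>Y. dY b w \<le> D}"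
  proof -
    have "b \<in> {w\<in>Y. dY b w \<le> D}" using b assms(8,6) by auto
    moreover have "finite {w\<in>Y. dY b w \<le> D}" using assms(4) by simp
    ultimately show ?thesis by (metis One_nat_def Suc_leI card_gt_0_iff empty_iff)
  qed
  also have "\<dots> \<le> N" unfolding N_def using b assms(4,8) by (intro ball_le_growth) auto
  finally have N1: "1 \<le> N" .
  have hP: "real N * real (card P) \<le> real (card B) / 2"
  proof -
    have "real N * real (card P) / real (card B) \<le> 1/2" using assms(11) N_def P_def by simp
    thus ?thesis using cB by (simp add: divide_simps)
  qed
  have fP: "finite P" unfolding P_def outer_boundary_def using assms(4) by simp
  have dense: "\<And>y. y \<in> Y \<Longrightarrow> \<exists>x\<in>X. dY (\<psi> x) y \<le> D \<and> \<psi> x \<in> Y"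
    using assms(7,5) unfolding dense_in_def by (fastforce simp: M.commute)
  have c1: "card B \<le> N * card (\<psi> ` A1 \<union> P)"
    unfolding N_def
  proof (rule cover_card[OF assms(4)])
    show "\<psi> ` A1 \<union> P \<subseteq> Y" using assms(5) unfolding A1_def P_def outer_boundary_def by auto
    show "B \<subseteq> (\<Union>z\<in>\<psi> ` A1 \<union> P. {w\<in>Y. dY z w \<le> D})"
    proof
      fix y assume y: "y \<in> B"
      then obtain x where x: "x \<in> X" "dY (\<psi> x) y \<le> D" "\<psi> x \<in> Y" using dense assms(8) by blast
      have "\<psi> x \<in> \<psi> ` A1 \<union> P"
        using x y unfolding A1_def P_def outer_boundary_def by (auto simp: M.commute)
      thus "y \<in> (\<Union>z\<in>\<psi> ` A1 \<union> P. {w\<in>Y. dY z w \<le> D})" using x y assms(8) by blast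
    qed
  qed
  have fA1: "finite A1" using assms(3) unfolding A1_def by simp
  have "card (\<psi> ` A1 \<union> P) \<le> card (\<psi> ` A1) + card P" by (rule card_Un_le)
  also have "\<dots> \<le> card A1 + card P" using card_image_le[OF fA1, of \<psi>] by simp
  finally have "N * card (\<psi> ` A1 \<union> P) \<le> N * (card A1 + card P)" by simp
  hence "card B \<le> N * (card A1 + card P)" using c1 by linarith
  hence "real (card B) \<le> real (N * (card A1 + card P))" by (simp only: of_nat_le_iff)
  hence "real (card B) \<le> real N * (real (card A1) + real (card P))" by simp
  hence b1: "real (card B) / 2 \<le> real N * real (card A1)" using hP by (simp add: algebra_simps)
  have c2: "card (Y - B) \<le> N * card (\<psi> ` A2) + card P"
  proof -
    have "Y - B \<subseteq> (Y - B - P) \<union> P" by auto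
    have "card (Y - B - P) \<le> N * card (\<psi> ` A2)"
      unfolding N_def
    proof (rule cover_card[OF assms(4)])
      show "\<psi> ` A2 \<subseteq> Y" unfolding A2_def by auto
      show "Y - B - P \<subseteq> (\<Union>z\<in>\<psi> ` A2. {w\<in>Y. dY z w \<le> D})"
      proof
        fix y assume y: "y \<in> Y - B - P"
        then obtain x where x: "x \<in> X" "dY (\<psi> x) y \<le> D" "\<psi> x \<in> Y" using dense by blast
        have "\<psi> x \<notin> B" using x y unfolding P_def outer_boundary_def by (auto simp: M.commute)
        hence "\<psi> x \<in> \<psi> ` A2" using x unfolding A2_def by auto
        thus "y \<in> (\<Union>z\<in>\<psi> ` A2. {w\<in>Y. dY z w \<le> D})" using x y by blast
      qed
    qed
    moreover have "card (Y - B) \<le> card (Y - B - P) + card P"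
    proof -
      have "card (Y - B) \<le> card ((Y - B - P) \<union> P)"
        using assms(4) fP \<open>Y - B \<subseteq> (Y - B - P) \<union> P\<close> by (intro card_mono) auto
      also have "\<dots> \<le> card (Y - B - P) + card P" by (rule card_Un_le)
      finally show ?thesis .
    qed
    ultimately show ?thesis by linarith
  qed
  have "card (\<psi> ` A2) \<le> card A2" using assms(3) unfolding A2_def by (intro card_image_le) simp
  hence "N * card (\<psi> ` A2) \<le> N * card A2" by simp
  hence "card (Y - B) \<le> N * card A2 + card P" using c2 by linarith
  hence "real (card (Y - B)) \<le> real (N * card A2 + card P)" by (simp only: of_nat_le_iff)
  hence "real (card (Y - B)) \<le> real N * real (card A2) + real (card P)" by simp
  moreover have "real (card P) \<le> real (card B) / 2"
  proof -
    have "real (card P) \<le> real N * real (card P)" using N1 by (simp add: mult_le_cancel_right1)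
    thus ?thesis using hP by linarith
  qed
  moreover have "real (card (Y - B)) = real (card Y) - real (card B)"
    using assms(4,8) fB by (simp add: card_Diff_subset of_nat_diff card_mono)
  ultimately have b2: "real (card B) / 2 \<le> real N * real (card A2)" using assms(10) by linarith
  have N0: "real N > 0" using N1 by simp
  have l1: "real (card B) / (2 * real N) \<le> real (card A1)"
    using b1 N0 by (simp add: divide_simps algebra_simps)
  have l2: "real (card B) / (2 * real N) \<le> real (card A2)"
    using b2 N0 by (simp add: divide_simps algebra_simps)
  have "A1 \<union> A2 = X" "A1 \<inter> A2 = {}" using assms(5) unfolding A1_def A2_def by auto
  hence "card A1 + card A2 = card X"
    using assms(3) card_Un_disjoint[of A1 A2] fA1 unfolding A2_def by simp
  hence "real (card A1) \<le> real (card X) / 2 \<or> real (card A2) \<le> real (card X) / 2" by linarith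
  thus ?thesis using l1 l2 unfolding A1_def A2_def N_def Let_def by blast
qed

end
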